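(* Let $\alpha,\beta>0$, $X\sim\mathsf{Beta}(\alpha,\beta)$ and $\mu_d=\mathbf{E}[(X-\mathbf{E}[X])^d]$ for integers $d\ge 0$ (so $\mu_0=1$, $\mu_1=0$). Then for every integer $d\ge 2$, $$\mu_d=\frac{(d-1)(\beta-\alpha)}{(\alpha+\beta)(\alpha+\beta+d-1)}\,\mu_{d-1}+\frac{(d-1)\alpha\beta}{(\alpha+\beta)^2(\alpha+\beta+d-1)}\,\mu_{d-2}.$$
   Context: $\mathsf{Beta}(\alpha,\beta)$ denotes the distribution on $[0,1]$ with density proportional to $x^{\alpha-1}(1-x)^{\beta-1}$. *)

theory Defs
  imports "HOL-Probability.Probability"
begin

definition beta_density :: "real \<Rightarrow> real \<Rightarrow> real \<Rightarrow> real" where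
  "beta_density a b x =
     (if 0 < x \<and> x < 1 then x powr (a - 1) * (1 - x) powr (b - 1) / Beta a b else 0)"

end

theory Submission
  imports Defs "HOL-Computational_Algebra.Polynomial"
begin

lemma Beta_real_pos: "a > 0 \<Longrightarrow> b > 0 \<Longrightarrow> Beta a b > (0::real)"
  unfolding Beta_def by simp

lemma beta_density_nonneg: "a > 0 \<Longrightarrow> b > 0 \<Longrightarrow> beta_density a b x \<ge> 0"
  unfolding beta_density_def using Beta_real_pos[of a b] by auto

lemma beta_moment:
  fixes M :: "'s measure" and X :: "'s \<Rightarrow> real"
  assumes a: "a > 0" and b: "b > 0"
    and D: "distributed M lborel X (\<lambda>x. ennreal (beta_density a b x))"
  shows "integrable M (\<lambda>\<omega>. X \<omega> ^ k) \<and> integral\<^sup>L M (\<lambda>\<omega>. X \<omega> ^ k) = Beta (a + k) b / Beta a b"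
proof -
  define B where "B = Beta a b"
  have B: "B > 0" using Beta_real_pos[OF a b] B_def by simp
  define I where "I = Beta (a + k) b / B"
  have I: "I \<ge> 0" unfolding I_def using Beta_real_pos[of "a+k" b] a b B by simp
  define h where "h x = x powr (a + k - 1) * (1 - x) powr (b - 1) / B" for x
  have "((\<lambda>x. x powr (a + k - 1) * (1 - x) powr (b - 1)) has_integral Beta (a + k) b) {0<..<1}"
    using has_integral_Beta_real[of "a+k" b] a b by (simp add: has_integral_Icc_iff_Ioo)
  hence hi: "(h has_integral I) {0<..<1}"
    unfolding h_def I_def by (rule has_integral_divide)
  have eq: "beta_density a b x * x ^ k = h x * indicator {0<..<1} x" for x
  proof (cases "0 < x \<and> x < 1")
    case True
    have "x powr (a - 1) * x ^ k = x powr (a + k - 1)"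
      using True by (simp add: powr_realpow[symmetric] powr_add[symmetric] algebra_simps)
    then show ?thesis using True unfolding beta_density_def h_def B_def
      by (simp add: field_simps)
  qed (auto simp: beta_density_def)
  have nn: "(\<integral>\<^sup>+x. ennreal (beta_density a b x * x ^ k) \<partial>lborel) = ennreal I"
  proof -
    have "(\<integral>\<^sup>+x. ennreal (beta_density a b x * x ^ k) \<partial>lborel)
        = (\<integral>\<^sup>+x. ennreal (h x) * indicator {0<..<1} x \<partial>lborel)"
      by (intro nn_integral_cong) (simp add: eq indicator_def)
    also have "\<dots> = ennreal I"
      by (rule nn_integral_has_integral_lebesgue'[OF _ hi])
         (use B a b in \<open>auto simp: h_def\<close>)
    finally show ?thesis .
  qed
  have fm: "beta_density a b \<in> borel_measurable lborel"
    using distributed_real_measurable[OF _ D] beta_density_nonneg[OF a b] by simp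
  have nonneg0: "0 \<le> beta_density a b x * x ^ k" for x
    unfolding eq using B a b by (auto simp: h_def indicator_def)
  have int: "integrable lborel (\<lambda>x. beta_density a b x * x ^ k)"
    by (rule integrableI_nn_integral_finite[OF _ _ nn]) (use fm nonneg0 in auto)
  have val: "integral\<^sup>L lborel (\<lambda>x. beta_density a b x * x ^ k) = I"
    using integral_eq_nn_integral[of "\<lambda>x. beta_density a b x * x ^ k" lborel] fm nn I nonneg0 by simp
  show ?thesis
    using distributed_integrable[OF D, of "\<lambda>x. x ^ k"] distributed_integral[OF D, of "\<lambda>x. x ^ k"]
      int val beta_density_nonneg[OF a b] by (simp add: I_def B_def)
qed

locale beta_rv = prob_space M for M :: "'s measure" +
  fixes X :: "'s \<Rightarrow> real" and a b :: real
  assumes a: "a > 0" and b: "b > 0"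
    and D: "distributed M lborel X (\<lambda>x. ennreal (beta_density a b x))"
begin

definition r :: "nat \<Rightarrow> real" where "r k = Beta (a + k) b / Beta a b"

lemma int_pow: "integrable M (\<lambda>\<omega>. X \<omega> ^ k)"
  using beta_moment[OF a b D] by blast

lemma exp_pow: "expectation (\<lambda>\<omega>. X \<omega> ^ k) = r k"
  using beta_moment[OF a b D] by (simp add: r_def)

lemma r0: "r 0 = 1"
  using Beta_real_pos[OF a b] by (simp add: r_def)

lemma r_rec: "(a + b + k) * r (Suc k) = (a + k) * r k"
proof -
  have "(a + k + b) * Beta (a + k + 1) b = (a + k) * Beta (a + k) b"
    by (rule Beta_plus1_left) (use a in \<open>auto elim!: nonpos_Ints_cases\<close>)
  thus ?thesis by (simp add: r_def algebra_simps add_divide_distrib)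
qed

lemma int_poly: "integrable M (\<lambda>\<omega>. poly p (X \<omega>))"
  unfolding poly_altdef by (rule Bochner_Integration.integrable_sum, rule integrable_mult_right, rule int_pow)

lemma lin2: "expectation (\<lambda>\<omega>. c1 * X \<omega> ^ i - c2 * X \<omega> ^ j) = c1 * r i - c2 * r j"
  using int_pow by (simp add: exp_pow)

definition Dp :: "real poly \<Rightarrow> real" where
  "Dp p = expectation (\<lambda>\<omega>. poly (pderiv p * [:0,1,-1:]) (X \<omega>))
        - expectation (\<lambda>\<omega>. poly (p * [:-a,a+b:]) (X \<omega>))"

lemma Dp_add: "Dp (p + q) = Dp p + Dp q"
proof -
  have e1: "(\<lambda>\<omega>. poly (pderiv (p+q) * [:0,1,-1:]) (X \<omega>)) = (\<lambda>\<omega>. poly (pderiv p * [:0,1,-1:]) (X \<omega>) + poly (pderiv q * [:0,1,-1:]) (X \<omega>))"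
    by (simp only: pderiv_add distrib_right poly_add)
  have e2: "(\<lambda>\<omega>. poly ((p+q) * [:-a,a+b:]) (X \<omega>)) = (\<lambda>\<omega>. poly (p * [:-a,a+b:]) (X \<omega>) + poly (q * [:-a,a+b:]) (X \<omega>))"
    by (simp only: distrib_right poly_add)
  show ?thesis
    unfolding Dp_def e1 e2
    using Bochner_Integration.integral_add[OF int_poly[of "pderiv p * [:0,1,-1:]"] int_poly[of "pderiv q * [:0,1,-1:]"]]
      Bochner_Integration.integral_add[OF int_poly[of "p * [:-a,a+b:]"] int_poly[of "q * [:-a,a+b:]"]]
    by linarith
qed

lemma Dp_zero: "Dp 0 = 0"
  by (simp add: Dp_def)

lemma Dp_monom: "Dp (monom c i) = 0"
proof (cases i)
  case 0
  have e1: "poly (pderiv (monom c i) * [:0,1,-1:]) x = 0 * x ^ 0 - 0 * x ^ 0" for x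
    using 0 by (simp add: pderiv_monom)
  have e: "poly (monom c i * [:-a,a+b:]) x = c*(a+b) * x ^ 1 - c*a * x ^ 0" for x
    using 0 by (simp add: poly_monom algebra_simps)
  have "(a + b + 0) * r (Suc 0) = (a + 0) * r 0" using r_rec[of 0] by simp
  then have h: "c * ((a+b) * r 1) = c * a" using r0 by simp
  show ?thesis using r0 h
    by (simp only: Dp_def e1 e lin2)
next
  case (Suc j)
  have e1: "poly (pderiv (monom c i) * [:0,1,-1:]) x = (Suc j * c) * x ^ (Suc j) - (Suc j * c) * x ^ (Suc (Suc j))" for x
    using Suc by (simp add: pderiv_monom poly_monom algebra_simps)
  have e2: "poly (monom c i * [:-a,a+b:]) x = c*(a+b) * x ^ (Suc (Suc j)) - c*a * x ^ (Suc j)" for x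
    using Suc by (simp add: poly_monom algebra_simps)
  have "(a + b + Suc j) * r (Suc (Suc j)) = (a + Suc j) * r (Suc j)" by (rule r_rec)
  then have h: "c * ((a + b + Suc j) * r (Suc (Suc j))) = c * ((a + Suc j) * r (Suc j))" by simp
  show ?thesis using h
    by (simp only: Dp_def e1 e2 lin2) (simp add: algebra_simps)
qed

lemma Dp_sum: "finite A \<Longrightarrow> Dp (\<Sum>i\<in>A. monom (f i) i) = 0"
  by (induction A rule: finite_induct) (simp_all add: Dp_zero Dp_add Dp_monom)

lemma stein: "Dp p = 0"
  using Dp_sum[of "{..degree p}" "coeff p"] by (simp add: poly_as_sum_of_monoms)

lemma mean: "expectation X = a / (a + b)"
proof -
  have "(a + b + 0) * r (Suc 0) = (a + 0) * r 0" using r_rec[of 0] by simp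
  hence "r 1 = a / (a + b)" using r0 a b by (simp add: field_simps)
  thus ?thesis using exp_pow[of 1] by simp
qed

lemma int_c: "integrable M (\<lambda>\<omega>. (X \<omega> - c) ^ j)"
proof -
  have eq: "(\<lambda>\<omega>. (X \<omega> - c) ^ j) = (\<lambda>\<omega>. poly ([:-c,1:] ^ j) (X \<omega>))"
    by (simp add: poly_power)
  show ?thesis unfolding eq by (rule int_poly)
qed

lemma lin3:
  fixes f g h :: "'s \<Rightarrow> real"
  assumes "integrable M f" "integrable M g" "integrable M h"
  shows "expectation (\<lambda>\<omega>. A * f \<omega> + B * g \<omega> - C * h \<omega>) = A * expectation f + B * expectation g - C * expectation h"
proof -
  have i1: "integrable M (\<lambda>\<omega>. A * f \<omega>)" using assms(1) by (rule integrable_mult_right)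
  have i2: "integrable M (\<lambda>\<omega>. B * g \<omega>)" using assms(2) by (rule integrable_mult_right)
  have i3: "integrable M (\<lambda>\<omega>. C * h \<omega>)" using assms(3) by (rule integrable_mult_right)
  have "expectation (\<lambda>\<omega>. A * f \<omega> + B * g \<omega> - C * h \<omega>)
     = expectation (\<lambda>\<omega>. A * f \<omega> + B * g \<omega>) - expectation (\<lambda>\<omega>. C * h \<omega>)"
    by (rule Bochner_Integration.integral_diff[OF Bochner_Integration.integrable_add[OF i1 i2] i3])
  also have "expectation (\<lambda>\<omega>. A * f \<omega> + B * g \<omega>) = expectation (\<lambda>\<omega>. A * f \<omega>) + expectation (\<lambda>\<omega>. B * g \<omega>)"
    by (rule Bochner_Integration.integral_add[OF i1 i2])
  finally show ?thesis by simp
qed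

lemma central:
  fixes n :: nat
  defines "m \<equiv> expectation X"
  defines "mu \<equiv> (\<lambda>j. expectation (\<lambda>\<omega>. (X \<omega> - m) ^ j))"
  shows "(a + b) * mu (Suc (Suc n)) =
     real (Suc n) * (m * (1 - m)) * mu n + real (Suc n) * (1 - 2 * m) * mu (Suc n) - real (Suc n) * mu (Suc (Suc n))"
proof -
  define L where "L = [:-m, 1:]"
  have sm: "(a + b) * m = a" using mean a b unfolding m_def by (simp add: field_simps)
  have e1: "poly (pderiv (L ^ Suc n) * [:0,1,-1:]) x =
      (real (Suc n) * (m * (1 - m))) * (x - m) ^ n + (real (Suc n) * (1 - 2 * m)) * (x - m) ^ (Suc n)
       - real (Suc n) * (x - m) ^ (Suc (Suc n))" for x
  proof -
    have "poly (pderiv (L ^ Suc n) * [:0,1,-1:]) x = real (Suc n) * (x - m) ^ n * (x - x * x)"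
    proof -
      have pL: "pderiv L = 1" by (simp add: L_def pderiv_pCons)
      have pd: "pderiv (L ^ Suc n) = smult (real (Suc n)) (L ^ n)"
        by (simp only: pderiv_power_Suc pL mult_1_right)
      have polyL: "poly L y = y - m" for y by (simp add: L_def)
      show ?thesis by (simp only: pd poly_mult poly_smult poly_power polyL) (simp add: algebra_simps)
    qed
    also have "x - x * x = m * (1 - m) + (1 - 2 * m) * (x - m) - (x - m) * (x - m)"
      by (simp add: algebra_simps)
    finally show ?thesis by (simp add: algebra_simps)
  qed
  have e2: "poly (L ^ Suc n * [:-a, a + b:]) x = (a + b) * (x - m) ^ (Suc (Suc n))" for x
  proof -
    have "poly (L ^ Suc n * [:-a, a + b:]) x = (x - m) ^ Suc n * (-a + (a + b) * x)"
      by (simp add: L_def poly_power algebra_simps)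
    also have "-a + (a + b) * x = (a + b) * (x - m)" using sm by (simp add: algebra_simps)
    finally show ?thesis by (simp add: algebra_simps)
  qed
  have "Dp (L ^ Suc n) = 0" by (rule stein)
  hence eq: "expectation (\<lambda>\<omega>. (real (Suc n) * (m * (1 - m))) * (X \<omega> - m) ^ n + (real (Suc n) * (1 - 2 * m)) * (X \<omega> - m) ^ (Suc n)
       - real (Suc n) * (X \<omega> - m) ^ (Suc (Suc n))) = expectation (\<lambda>\<omega>. (a + b) * (X \<omega> - m) ^ (Suc (Suc n)))"
    unfolding Dp_def e1 e2 by simp
  have lhs: "expectation (\<lambda>\<omega>. (real (Suc n) * (m * (1 - m))) * (X \<omega> - m) ^ n + (real (Suc n) * (1 - 2 * m)) * (X \<omega> - m) ^ (Suc n)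
       - real (Suc n) * (X \<omega> - m) ^ (Suc (Suc n))) = real (Suc n) * (m * (1 - m)) * mu n + real (Suc n) * (1 - 2 * m) * mu (Suc n) - real (Suc n) * mu (Suc (Suc n))"
    unfolding mu_def by (rule lin3[OF int_c int_c int_c])
  show ?thesis using eq lhs unfolding mu_def by simp
qed

end

lemma final_alg:
  fixes S T N D E u v :: real
  assumes "S \<noteq> 0" "T \<noteq> 0"
  shows "(N * (D / S) * u + N * (E / S^2) * v) / T = N * D / (S * T) * u + N * E / (S^2 * T) * v"
  using assms by (simp add: field_simps power2_eq_square)

theorem theorem3:
  fixes M :: "'s measure" and X :: "'s \<Rightarrow> real" and \<alpha> \<beta> :: real and \<mu> :: "nat \<Rightarrow> real"
  assumes "prob_space M"
    and "\<alpha> > 0" and "\<beta> > 0"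
    and "distributed M lborel X (\<lambda>x. ennreal (beta_density \<alpha> \<beta> x))"
    and "\<And>d. \<mu> d = prob_space.expectation M (\<lambda>\<omega>. (X \<omega> - prob_space.expectation M X) ^ d)"
    and "d \<ge> 2"
  shows "\<mu> d = real (d - 1) * (\<beta> - \<alpha>) / ((\<alpha> + \<beta>) * (\<alpha> + \<beta> + real d - 1)) * \<mu> (d - 1)
             + real (d - 1) * \<alpha> * \<beta> / ((\<alpha> + \<beta>)^2 * (\<alpha> + \<beta> + real d - 1)) * \<mu> (d - 2)"
proof -
  have br: "beta_rv M X \<alpha> \<beta>" unfolding beta_rv_def beta_rv_axioms_def using assms by auto
  interpret B: beta_rv M X \<alpha> \<beta> by (rule br)
  define n where "n = d - 2"
  have dn: "d = Suc (Suc n)" using assms(6) by (simp add: n_def)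
  define m where "m = B.expectation X"
  have mv: "m = \<alpha> / (\<alpha> + \<beta>)" using B.mean m_def by simp
  have c: "(\<alpha> + \<beta>) * \<mu> (Suc (Suc n)) =
     real (Suc n) * (m * (1 - m)) * \<mu> n + real (Suc n) * (1 - 2 * m) * \<mu> (Suc n) - real (Suc n) * \<mu> (Suc (Suc n))"
    using B.central[of n] unfolding assms(5) m_def .
  have s: "\<alpha> + \<beta> > 0" using assms(2,3) by simp
  have s2: "\<alpha> + \<beta> + real n + 1 > 0" using s by simp
  have key: "\<mu> (Suc (Suc n)) * (\<alpha> + \<beta> + real n + 1) =
     (real n + 1) * ((\<beta> - \<alpha>) / (\<alpha> + \<beta>)) * \<mu> (Suc n) + (real n + 1) * (\<alpha> * \<beta> / (\<alpha> + \<beta>)^2) * \<mu> n"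
  proof -
    have h1: "1 - 2 * m = (\<beta> - \<alpha>) / (\<alpha> + \<beta>)" using s unfolding mv by (simp add: field_simps)
    have h2: "m * (1 - m) = \<alpha> * \<beta> / (\<alpha> + \<beta>)^2" using s unfolding mv by (simp add: field_simps power2_eq_square)
    show ?thesis using c unfolding h1 h2 by (simp add: algebra_simps)
  qed
  have q: "\<mu> (Suc (Suc n)) = ((real n + 1) * ((\<beta> - \<alpha>) / (\<alpha> + \<beta>)) * \<mu> (Suc n) + (real n + 1) * (\<alpha> * \<beta> / (\<alpha> + \<beta>)^2) * \<mu> n) / (\<alpha> + \<beta> + real n + 1)"
    using key s2 by (simp add: eq_divide_eq)
  have r1: "real (d - 1) = real n + 1" "\<alpha> + \<beta> + real d - 1 = \<alpha> + \<beta> + real n + 1" "d - 1 = Suc n" "d - 2 = n"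
    using dn by auto
  have sne: "\<alpha> + \<beta> \<noteq> 0" "\<alpha> + \<beta> + real n + 1 \<noteq> 0" using s s2 by auto
  show ?thesis
    unfolding r1 unfolding dn q using final_alg[OF sne] by (simp add: mult.assoc add.commute)
qed

end
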